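(* For integers $n,m,l,r$ with $1\leq m\leq l<n$ and $0\leq r\leq 2l-2m+2$, the polynomial \[ K_q(n,m)K_q(n,l)-q^{r}K_q(n,m-1)K_q(n,l+1) \] has nonnegative coefficients as a polynomial in $q$.
   Context: For integers $n\ge m\ge 0$ the Gaussian polynomial is ${n\brack m}=\prod_{i=0}^{m-1}\frac{1-q^{n-i}}{1-q^{m-i}}$. For $n\geq 1$ and $0\le m\le n$, the $q$-Kaplansky number is $K_q(n,m)=\frac{1-q^{n+m}}{1-q^{n}}{n\brack m}$ (a polynomial in $q$). *)

theory Defs
  imports "HOL-Computational_Algebra.Polynomial"
begin

text \<open>Gaussian polynomial [n choose m]_q, defined literally as the quotient of the
  products in the paper, computed in the polynomial ring Q[q] (exact division).\<close>
definition gauss_poly :: "nat \<Rightarrow> nat \<Rightarrow> rat poly" where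
  "gauss_poly n m =
     (\<Prod>i<m. 1 - monom 1 (n - i)) div (\<Prod>i<m. 1 - monom 1 (m - i))"

definition kaplansky_poly :: "nat \<Rightarrow> nat \<Rightarrow> rat poly" where
  "kaplansky_poly n m = ((1 - monom 1 (n + m)) * gauss_poly n m) div (1 - monom 1 n)"

end

theory Submission
  imports Defs
begin

definition qq :: "rat poly" where "qq = [:0,1:]"

lemma monom1_qq: "monom (1::rat) k = qq ^ k"
  by (simp add: monom_altdef qq_def)

lemma poly_qq_pow0: "k \<ge> 1 \<Longrightarrow> poly (qq ^ k) 0 = 0"
  by (simp add: qq_def power_0_left)

lemma qq_pow_ne1: assumes "k \<ge> 1" shows "qq ^ k \<noteq> 1"
proof
  assume "qq ^ k = 1"
  then have "poly (qq ^ k) 0 = 1" by simp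
  then show False using poly_qq_pow0[OF assms] by (metis zero_neq_one)
qed

lemma qq_pow_ne1': "a < m \<Longrightarrow> qq ^ (m - a) \<noteq> 1"
  by (intro qq_pow_ne1) simp

lemma one_minus_qq_nz: "k \<ge> 1 \<Longrightarrow> (1 - qq ^ k) \<noteq> 0"
  using qq_pow_ne1 by force

fun gb :: "nat \<Rightarrow> nat \<Rightarrow> rat poly" where
  "gb 0 k = (if k = 0 then 1 else 0)"
| "gb (Suc n) k = (if k = 0 then 1 else gb n (k-1) + qq^k * gb n k)"

definition PP :: "nat \<Rightarrow> nat \<Rightarrow> rat poly" where
  "PP n m = (\<Prod>i<m. 1 - qq ^ (n - i))"
definition DD :: "nat \<Rightarrow> rat poly" where
  "DD m = (\<Prod>i<m. 1 - qq ^ (m - i))"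

lemma DD_nz: "DD m \<noteq> 0"
  unfolding DD_def by (subst prod_zero_iff) (auto simp: one_minus_qq_nz qq_pow_ne1')

lemma DD_Suc: "DD (Suc k) = (1 - qq ^ Suc k) * DD k"
  unfolding DD_def prod.lessThan_Suc_shift by simp

lemma PP_Suc_Suc: "PP (Suc n) (Suc k) = (1 - qq ^ Suc n) * PP n k"
  unfolding PP_def prod.lessThan_Suc_shift by simp

lemma PP_Suc2: "PP n (Suc k) = PP n k * (1 - qq ^ (n - k))"
  unfolding PP_def by (simp add: prod.lessThan_Suc)

lemma PP_zero: "n < k \<Longrightarrow> PP n k = 0"
  unfolding PP_def by (subst prod_zero_iff) (auto intro!: bexI[of _ n])

lemma gb_DD: "gb n m * DD m = PP n m"
proof (induction n arbitrary: m)
  case 0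
  then show ?case
    by (cases m) (auto simp: DD_def PP_def PP_zero)
next
  case (Suc n)
  show ?case
  proof (cases m)
    case 0 then show ?thesis by (simp add: DD_def PP_def)
  next
    case (Suc k)
    have e1: "gb n k * DD (Suc k) = (1 - qq ^ Suc k) * PP n k"
      using Suc.IH[of k] by (simp add: DD_Suc algebra_simps)
    have e2: "gb n (Suc k) * DD (Suc k) = PP n k * (1 - qq ^ (n - k))"
      using Suc.IH[of "Suc k"] by (simp add: PP_Suc2)
    have e3: "qq ^ Suc k * (PP n k * (1 - qq ^ (n - k))) = qq ^ Suc k * PP n k - qq ^ Suc n * PP n k"
    proof (cases "k \<le> n")
      case True
      have h: "qq ^ Suc k * qq ^ (n - k) = qq ^ Suc n"
        using True by (simp flip: power_add)
      have "qq ^ Suc k * (PP n k * (1 - qq ^ (n - k))) = qq ^ Suc k * PP n k - (qq ^ Suc k * qq ^ (n - k)) * PP n k"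
        by (simp add: algebra_simps)
      then show ?thesis by (simp only: h)
    next
      case False then show ?thesis by (simp add: PP_zero)
    qed
    have "gb (Suc n) m * DD m = gb n k * DD (Suc k) + qq ^ Suc k * (gb n (Suc k) * DD (Suc k))"
      using Suc by (simp add: algebra_simps)
    also have "\<dots> = (1 - qq ^ Suc n) * PP n k"
      by (simp only: e1 e2 e3) (simp add: algebra_simps)
    also have "\<dots> = PP (Suc n) m" using Suc by (simp add: PP_Suc_Suc)
    finally show ?thesis .
  qed
qed

lemma gauss_gb: "gauss_poly n m = gb n m"
proof -
  have "gauss_poly n m = PP n m div DD m"
    unfolding gauss_poly_def PP_def DD_def monom1_qq by simp
  also have "\<dots> = gb n m" by (simp add: gb_DD[symmetric] DD_nz)
  finally show ?thesis .
qed

lemma gb_zero: "n < k \<Longrightarrow> gb n k = 0"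
  using gb_DD[of n k] PP_zero[of n k] DD_nz[of k] by simp

lemma gb_0 [simp]: "gb n 0 = 1"
  by (cases n) auto

lemma gb_pasc2: "gb (Suc n) (Suc k) = qq ^ (n - k) * gb n k + gb n (Suc k)"
proof -
  have "gb (Suc n) (Suc k) * DD (Suc k) = (qq ^ (n - k) * gb n k + gb n (Suc k)) * DD (Suc k)"
  proof -
    have l: "gb (Suc n) (Suc k) * DD (Suc k) = (1 - qq ^ Suc n) * PP n k"
      by (simp only: gb_DD PP_Suc_Suc)
    have r: "(qq ^ (n - k) * gb n k + gb n (Suc k)) * DD (Suc k)
        = qq ^ (n - k) * (1 - qq ^ Suc k) * PP n k + PP n k * (1 - qq ^ (n - k))"
    proof -
      have r1: "(qq ^ (n - k) * gb n k + gb n (Suc k)) * DD (Suc k)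
          = qq ^ (n - k) * (1 - qq ^ Suc k) * (gb n k * DD k) + gb n (Suc k) * DD (Suc k)"
        by (simp only: DD_Suc) (simp add: algebra_simps)
      show ?thesis by (simp only: r1 gb_DD PP_Suc2)
    qed
    show ?thesis
    proof (cases "k \<le> n")
      case True
      have h: "qq ^ (n - k) * qq ^ Suc k = qq ^ Suc n"
        using True by (simp flip: power_add)
      have "qq ^ (n - k) * (1 - qq ^ Suc k) * PP n k + PP n k * (1 - qq ^ (n - k))
          = PP n k - (qq ^ (n - k) * qq ^ Suc k) * PP n k"
        by (simp add: algebra_simps)
      then show ?thesis using l r by (simp only: h) (simp add: algebra_simps)
    next
      case False then show ?thesis using l r by (simp add: PP_zero gb_zero)
    qed
  qed
  then show ?thesis using DD_nz by simp
qed

lemma gb_L7: "(1 - qq ^ Suc k) * gb (Suc n) (Suc k) = (1 - qq ^ Suc n) * gb n k"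
proof -
  have "(1 - qq ^ Suc k) * gb (Suc n) (Suc k) * DD k = gb (Suc n) (Suc k) * DD (Suc k)"
    by (simp only: DD_Suc ac_simps)
  also have "\<dots> = (1 - qq ^ Suc n) * PP n k" by (simp only: gb_DD PP_Suc_Suc)
  also have "\<dots> = (1 - qq ^ Suc n) * gb n k * DD k" by (simp add: gb_DD[symmetric] ac_simps)
  finally have "(1 - qq ^ Suc k) * gb (Suc n) (Suc k) * DD k = (1 - qq ^ Suc n) * gb n k * DD k" .
  then show ?thesis using DD_nz by simp
qed

lemma nat_1_plus [simp]: "nat (1 + int x) = Suc x" by arith
lemma nat_int_minus [simp]: "nat (int a - int b) = a - b" by arith

definition gz :: "nat \<Rightarrow> int \<Rightarrow> rat poly" where
  "gz n k = (if k < 0 then 0 else gb n (nat k))"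

lemma gz_out: "k < 0 \<or> int n < k \<Longrightarrow> gz n k = 0"
  by (auto simp: gz_def gb_zero)

lemma gz_pasc1: "gz (Suc n) k = gz n (k - 1) + qq ^ nat k * gz n k"
  by (cases "k < 0"; cases "k = 0") (auto simp: gz_def nat_diff_distrib')

lemma gz_pasc2: "gz (Suc n) k = qq ^ nat (int (Suc n) - k) * gz n (k - 1) + gz n k"
proof (cases "k \<le> 0")
  case True then show ?thesis by (cases "k = 0") (auto simp: gz_def)
next
  case False
  then obtain k' where k: "k = int (Suc k')" by (metis not_le zero_less_imp_eq_int Suc_pred' of_nat_0_less_iff)
  then show ?thesis using gb_pasc2[of n k'] by (simp add: gz_def)
qed

lemma kap_gz: assumes "n \<ge> 1"
  shows "kaplansky_poly n m = gz n (int m) + qq ^ n * gz (n - 1) (int m - 1)"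
proof -
  have nz: "1 - qq ^ n \<noteq> 0" using one_minus_qq_nz assms by blast
  have key: "(1 - qq ^ (n + m)) * gb n m = (1 - qq ^ n) * (gz n (int m) + qq ^ n * gz (n - 1) (int m - 1))"
  proof (cases m)
    case 0 then show ?thesis by (simp add: gz_def)
  next
    case (Suc k)
    obtain n' where n: "n = Suc n'" using assms by (cases n) auto
    have L: "(1 - qq ^ Suc k) * gb (Suc n') (Suc k) = (1 - qq ^ Suc n') * gb n' k" by (rule gb_L7)
    have "(1 - qq ^ n) * (gz n (int m) + qq ^ n * gz (n - 1) (int m - 1))
        = (1 - qq ^ n) * gb n m + qq ^ n * ((1 - qq ^ Suc n') * gb n' k)"
      using Suc n by (simp add: gz_def algebra_simps)
    also have "\<dots> = (1 - qq ^ n) * gb n m + qq ^ n * ((1 - qq ^ m) * gb n m)"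
      using L Suc n by simp
    also have "\<dots> = (1 - qq ^ (n + m)) * gb n m" by (simp add: algebra_simps power_add)
    finally show ?thesis by simp
  qed
  have "kaplansky_poly n m = ((1 - qq ^ (n + m)) * gb n m) div (1 - qq ^ n)"
    unfolding kaplansky_poly_def monom1_qq gauss_gb by simp
  also have "\<dots> = gz n (int m) + qq ^ n * gz (n - 1) (int m - 1)"
    unfolding key using nz by simp
  finally show ?thesis .
qed

definition nn :: "rat poly \<Rightarrow> bool" where
  "nn p \<longleftrightarrow> (\<forall>i. coeff p i \<ge> 0)"

lemma nn_0 [simp]: "nn 0" by (simp add: nn_def)
lemma nn_1 [simp]: "nn 1" by (simp add: nn_def coeff_1)
lemma nn_add: "nn p \<Longrightarrow> nn q \<Longrightarrow> nn (p + q)" by (simp add: nn_def)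
lemma nn_mult: "nn p \<Longrightarrow> nn q \<Longrightarrow> nn (p * q)"
  unfolding nn_def coeff_mult by (auto intro!: sum_nonneg)
lemma nn_qq_pow: "nn (qq ^ k)"
  unfolding monom1_qq[symmetric] nn_def by (simp add: coeff_monom)

lemma nn_gb: "nn (gb n k)"
  by (induction n arbitrary: k) (auto intro!: nn_add nn_mult nn_qq_pow)

lemma nn_gz: "nn (gz n k)"
  by (simp add: gz_def nn_gb)

lemma nn_comb: "nn E1 \<Longrightarrow> nn E2 \<Longrightarrow> nn c1 \<Longrightarrow> nn c2 \<Longrightarrow> T = c1 * E1 + c2 * E2 \<Longrightarrow> nn T"
  by (simp add: nn_add nn_mult)

lemma GL_aux:
  fixes A B t :: nat and i j :: int
  assumes "A + B = N" "int B - j - 1 \<le> int A - i" "i \<le> j + 1"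
      "int t \<le> int A - int B + 2 * (j - i + 1)"
  shows "nn (gz A i * gz B j - qq ^ t * (gz A (i - 1) * gz B (j + 1)))"
  using assms
proof (induction N arbitrary: A B i j t rule: less_induct)
  case (less N)
  have IH: "nn (gz A' i' * gz B' j' - qq ^ t' * (gz A' (i' - 1) * gz B' (j' + 1)))"
    if "A' + B' < A + B" "int B' - j' - 1 \<le> int A' - i'" "i' \<le> j' + 1"
      "int t' \<le> int A' - int B' + 2 * (j' - i' + 1)" for A' B' t' :: nat and i' j' :: int
    by (rule less.IH[of "A' + B'"]) (use less.prems that in auto)
  note a = less.prems(2) and b = less.prems(3) and c = less.prems(4)
  show ?case
  proof (cases "i \<le> 0 \<or> int B < j + 1")
    case True
    then have z: "gz A (i - 1) * gz B (j + 1) = 0" using gz_out by auto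
    have "nn (gz A i * gz B j)" by (simp add: nn_mult nn_gz)
    then show ?thesis by (simp add: z)
  next
    case False
    hence i1: "1 \<le> i" and jB: "j + 1 \<le> int B" by auto
    obtain i0 where i0: "i = int i0 + 1" using i1 by (metis add.commute add_minus_cancel int_nat_eq le_add_same_cancel1 nat_0_le zle_add1_eq_le zless_nat_conj)
    show ?thesis
    proof (cases "i \<le> j")
      case True
      obtain j0 where j0: "j = int j0" using True i1 by (metis int_nat_eq order_trans zero_le_one)
      obtain B' where B: "B = Suc B'" using jB i1 True by (cases B) auto
      show ?thesis
      proof (cases t)
        case 0
        have IH1: "nn (gz A i * gz B' (j - 1) - qq ^ 0 * (gz A (i - 1) * gz B' (j - 1 + 1)))"
          by (rule IH) (use a b c True B in auto)
        have IH2: "nn (gz A i * gz B' j - qq ^ 1 * (gz A (i - 1) * gz B' (j + 1)))"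
          by (rule IH) (use a b c True B in auto)
        have p1: "gz B j = gz B' (j - 1) + qq ^ nat j * gz B' j" using B gz_pasc1 by simp
        have p2: "gz B (j + 1) = gz B' j + qq ^ nat (j + 1) * gz B' (j + 1)" using B gz_pasc1[of B' "j+1"] by simp
        show ?thesis
        proof (rule nn_comb[OF IH1 IH2 nn_1 nn_qq_pow[of "nat j"]])
          show "gz A i * gz B j - qq ^ t * (gz A (i - 1) * gz B (j + 1)) =
            1 * (gz A i * gz B' (j - 1) - qq ^ 0 * (gz A (i - 1) * gz B' (j - 1 + 1))) +
            qq ^ nat j * (gz A i * gz B' j - qq ^ 1 * (gz A (i - 1) * gz B' (j + 1)))"
            unfolding p1 p2 using 0 j0 by (simp add: algebra_simps)
        qed
      next
        case (Suc t0)
        have IH1: "nn (gz A i * gz B' (j - 1) - qq ^ t0 * (gz A (i - 1) * gz B' (j - 1 + 1)))"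
          by (rule IH) (use a b c True B Suc in auto)
        have IH2: "nn (gz A i * gz B' j - qq ^ t * (gz A (i - 1) * gz B' (j + 1)))"
          by (rule IH) (use a b c True B in auto)
        have p1: "gz B j = qq ^ nat (int B - j) * gz B' (j - 1) + gz B' j" using B gz_pasc2 by simp
        have p2: "gz B (j + 1) = qq ^ nat (int B - (j + 1)) * gz B' j + gz B' (j + 1)"
          using B gz_pasc2[of B' "j+1"] by simp
        have e: "nat (int B - j) = Suc (nat (int B - (j + 1)))" using jB by simp
        show ?thesis
        proof (rule nn_comb[OF IH1 IH2 nn_qq_pow[of "nat (int B - j)"] nn_1])
          show "gz A i * gz B j - qq ^ t * (gz A (i - 1) * gz B (j + 1)) =
            qq ^ nat (int B - j) * (gz A i * gz B' (j - 1) - qq ^ t0 * (gz A (i - 1) * gz B' (j - 1 + 1))) +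
            1 * (gz A i * gz B' j - qq ^ t * (gz A (i - 1) * gz B' (j + 1)))"
            unfolding p1 p2 e using Suc by (simp add: algebra_simps)
        qed
      qed
    next
      case False
      hence ij: "i = j + 1" using b by simp
      show ?thesis
      proof (cases "int B - j - 1 = int A - i")
        case True
        hence AB: "A = B" using ij by simp
        hence "t = 0" using c ij by simp
        then show ?thesis using AB ij by simp
      next
        case False
        hence al: "int B - j - 1 + 1 \<le> int A - i" using a by simp
        obtain A' where A: "A = Suc A'" using al jB ij by (cases A) auto
        have iA: "i \<le> int A'" using al jB ij A by simp
        show ?thesis
        proof (cases t)
          case 0
          have IH1: "nn (gz A' (i - 1) * gz B j - qq ^ 1 * (gz A' (i - 1 - 1) * gz B (j + 1)))"
            by (rule IH) (use a b c A al in auto)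
          have IH2: "nn (gz A' i * gz B j - qq ^ 0 * (gz A' (i - 1) * gz B (j + 1)))"
            by (rule IH) (use a b c A al ij in auto)
          have p1: "gz A i = qq ^ nat (int A - i) * gz A' (i - 1) + gz A' i" using A gz_pasc2 by simp
          have p2: "gz A (i - 1) = qq ^ nat (int A - (i - 1)) * gz A' (i - 1 - 1) + gz A' (i - 1)"
            using A gz_pasc2[of A' "i - 1"] by simp
          have e: "nat (int A - (i - 1)) = Suc (nat (int A - i))" using iA A by simp
          show ?thesis
          proof (rule nn_comb[OF IH1 IH2 nn_qq_pow[of "nat (int A - i)"] nn_1])
            show "gz A i * gz B j - qq ^ t * (gz A (i - 1) * gz B (j + 1)) =
              qq ^ nat (int A - i) * (gz A' (i - 1) * gz B j - qq ^ 1 * (gz A' (i - 1 - 1) * gz B (j + 1))) +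
              1 * (gz A' i * gz B j - qq ^ 0 * (gz A' (i - 1) * gz B (j + 1)))"
              unfolding p1 p2 e using 0 by (simp add: algebra_simps)
          qed
        next
          case (Suc t0)
          have IH1: "nn (gz A' (i - 1) * gz B j - qq ^ t * (gz A' (i - 1 - 1) * gz B (j + 1)))"
            by (rule IH) (use a b c A al in auto)
          have IH2: "nn (gz A' i * gz B j - qq ^ t0 * (gz A' (i - 1) * gz B (j + 1)))"
            by (rule IH) (use a b c A al ij Suc in auto)
          have p1: "gz A i = gz A' (i - 1) + qq ^ nat i * gz A' i" using A gz_pasc1 by simp
          have p2: "gz A (i - 1) = gz A' (i - 1 - 1) + qq ^ nat (i - 1) * gz A' (i - 1)"
            using A gz_pasc1[of A' "i - 1"] by simp
          show ?thesis
          proof (rule nn_comb[OF IH1 IH2 nn_1 nn_qq_pow[of "nat i"]])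
            show "gz A i * gz B j - qq ^ t * (gz A (i - 1) * gz B (j + 1)) =
              1 * (gz A' (i - 1) * gz B j - qq ^ t * (gz A' (i - 1 - 1) * gz B (j + 1))) +
              qq ^ nat i * (gz A' i * gz B j - qq ^ t0 * (gz A' (i - 1) * gz B (j + 1)))"
              unfolding p1 p2 using Suc i0 by (simp add: algebra_simps)
          qed
        qed
      qed
    qed
  qed
qed

lemma GL:
  fixes A B t :: nat and i j :: int
  assumes "int B - j - 1 \<le> int A - i" "i \<le> j + 1"
      "int t \<le> int A - int B + 2 * (j - i + 1)"
  shows "nn (gz A i * gz B j - qq ^ t * (gz A (i - 1) * gz B (j + 1)))"
  using GL_aux[OF refl assms] .

lemma kap_gz2: assumes "n \<ge> 1"
  shows "kaplansky_poly n m = qq ^ m * gz n (int m) + gz (n - 1) (int m - 1)"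
proof (cases m)
  case 0 then show ?thesis using kap_gz[OF assms, of m] by (simp add: gz_def)
next
  case (Suc k)
  obtain n' where n: "n = Suc n'" using assms by (cases n) auto
  have L: "(1 - qq ^ Suc k) * gb (Suc n') (Suc k) = (1 - qq ^ Suc n') * gb n' k" by (rule gb_L7)
  have "gb n m + qq ^ n * gb n' k = qq ^ m * gb n m + gb n' k"
  proof -
    have "gb n m - qq ^ m * gb n m = gb n' k - qq ^ n * gb n' k"
      using L Suc n by (simp add: algebra_simps)
    then show ?thesis by (simp add: algebra_simps)
  qed
  then show ?thesis using kap_gz[OF assms, of m] Suc n by (simp add: gz_def)
qed

lemma nn_comb4: "nn E1 \<Longrightarrow> nn E2 \<Longrightarrow> nn E3 \<Longrightarrow> nn E4 \<Longrightarrow> nn c1 \<Longrightarrow> nn c2 \<Longrightarrow> nn c3 \<Longrightarrow> nn c4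
  \<Longrightarrow> T = c1 * E1 + c2 * E2 + c3 * E3 + c4 * E4 \<Longrightarrow> nn T"
  by (simp add: nn_add nn_mult)

theorem theorem1p2:
  fixes n m l r :: nat
  assumes "1 \<le> m" and "m \<le> l" and "l < n" and "r \<le> 2 * l - 2 * m + 2"
  shows "\<forall>i. coeff (kaplansky_poly n m * kaplansky_poly n l
                  - monom 1 r * kaplansky_poly n (m - 1) * kaplansky_poly n (l + 1)) i \<ge> 0"
proof -
  obtain m0 where m: "m = Suc m0" using assms(1) by (cases m) auto
  obtain n' where n: "n = Suc n'" using assms by (cases n) auto
  have n1: "n \<ge> 1" using n by simp
  have r2: "int r \<le> 2 * int l - 2 * int m + 2" using assms by linarith
  let ?T = "kaplansky_poly n m * kaplansky_poly n l
                  - monom 1 r * kaplansky_poly n (m - 1) * kaplansky_poly n (l + 1)"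
  have "nn ?T"
  proof (cases "int r \<le> 2 * int l - 2 * int m + 1")
    case True
    have E1: "nn (gz n (int m) * gz n (int l) - qq ^ r * (gz n (int m - 1) * gz n (int l + 1)))"
      by (rule GL) (use assms r2 in auto)
    have E2: "nn (gz n' (int m - 1) * gz n (int l) - qq ^ r * (gz n' (int m - 1 - 1) * gz n (int l + 1)))"
      by (rule GL) (use assms r2 n in auto)
    have E3: "nn (gz n (int m) * gz n' (int l - 1) - qq ^ r * (gz n (int m - 1) * gz n' (int l - 1 + 1)))"
      by (rule GL) (use assms True n in auto)
    have E4: "nn (gz n' (int m - 1) * gz n' (int l - 1) - qq ^ r * (gz n' (int m - 1 - 1) * gz n' (int l - 1 + 1)))"
      by (rule GL) (use assms r2 n in auto)
    show ?thesis
    proof (rule nn_comb4[OF E1 E2 E3 E4 nn_1 nn_qq_pow[of n] nn_qq_pow[of n] nn_qq_pow[of "n + n"]])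
      show "?T = 1 * (gz n (int m) * gz n (int l) - qq ^ r * (gz n (int m - 1) * gz n (int l + 1))) +
          qq ^ n * (gz n' (int m - 1) * gz n (int l) - qq ^ r * (gz n' (int m - 1 - 1) * gz n (int l + 1))) +
          qq ^ n * (gz n (int m) * gz n' (int l - 1) - qq ^ r * (gz n (int m - 1) * gz n' (int l - 1 + 1))) +
          qq ^ (n + n) * (gz n' (int m - 1) * gz n' (int l - 1) - qq ^ r * (gz n' (int m - 1 - 1) * gz n' (int l - 1 + 1)))"
        unfolding kap_gz[OF n1] monom1_qq using m n by (simp add: algebra_simps power_add)
    qed
  next
    case False
    then obtain r0 where r: "r = Suc r0" using assms(2) by (cases r) auto
    have E1: "nn (gz n (int m) * gz n (int l) - qq ^ r * (gz n (int m - 1) * gz n (int l + 1)))"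
      by (rule GL) (use assms r2 in auto)
    have E2: "nn (gz n' (int m - 1) * gz n (int l) - qq ^ Suc r * (gz n' (int m - 1 - 1) * gz n (int l + 1)))"
      by (rule GL) (use assms r2 n in auto)
    have E3: "nn (gz n (int m) * gz n' (int l - 1) - qq ^ r0 * (gz n (int m - 1) * gz n' (int l - 1 + 1)))"
      by (rule GL) (use assms r2 r n in auto)
    have E4: "nn (gz n' (int m - 1) * gz n' (int l - 1) - qq ^ r * (gz n' (int m - 1 - 1) * gz n' (int l - 1 + 1)))"
      by (rule GL) (use assms r2 n in auto)
    show ?thesis
    proof (rule nn_comb4[OF E1 E2 E3 E4 nn_qq_pow[of "m + l"] nn_qq_pow[of l] nn_qq_pow[of m] nn_1])
      show "?T = qq ^ (m + l) * (gz n (int m) * gz n (int l) - qq ^ r * (gz n (int m - 1) * gz n (int l + 1))) +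
          qq ^ l * (gz n' (int m - 1) * gz n (int l) - qq ^ Suc r * (gz n' (int m - 1 - 1) * gz n (int l + 1))) +
          qq ^ m * (gz n (int m) * gz n' (int l - 1) - qq ^ r0 * (gz n (int m - 1) * gz n' (int l - 1 + 1))) +
          1 * (gz n' (int m - 1) * gz n' (int l - 1) - qq ^ r * (gz n' (int m - 1 - 1) * gz n' (int l - 1 + 1)))"
        unfolding kap_gz2[OF n1] monom1_qq using m n r by (simp add: algebra_simps power_add)
    qed
  qed
  then show ?thesis by (simp add: nn_def)
qed

end
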